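(* Let $(X,\|\cdot\|)$ be a uniformly convex Banach space and let $\{v_n\}_{n\in\mathbb{N}}\subset X$ satisfy $\|v_{n+m}\|\le\|v_n+v_m\|$ for all $n,m\in\mathbb{N}$ and $\lim_{n\to\infty}\frac{\|v_n\|}{n}=1$. Then $v_n\neq 0$ for all $n$, and for every $\varepsilon>0$ there exists $N$ such that for all integers $n,m$ with $N\le n\le m\le 4n$ we have $$\left\|\frac{v_n}{\|v_n\|}-\frac{v_m}{\|v_m\|}\right\|<\varepsilon.$$
   Context: $\mathbb{N}=\{1,2,3,\dots\}$. A Banach space $X$ is uniformly convex if for every $\varepsilon>0$ there exists $\delta>0$ such that for all $u,v\in X$ with $\|u\|=\|v\|=1$ and $\|u-v\|\ge\varepsilon$ we have $\|u+v\|\le 2-\delta$. *)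

theory Defs
  imports "HOL-Analysis.Analysis"
begin

definition uniformly_convex :: "'a::real_normed_vector itself \<Rightarrow> bool" where
  "uniformly_convex _ \<longleftrightarrow>
     (\<forall>\<epsilon>>0. \<exists>\<delta>>0. \<forall>u v::'a. norm u = 1 \<and> norm v = 1 \<and> norm (u - v) \<ge> \<epsilon>
        \<longrightarrow> norm (u + v) \<le> 2 - \<delta>)"

end

theory Submission
  imports Defs
begin

lemma uc_ineq:
  fixes x y :: "'a::real_normed_vector"
  assumes x: "norm x = 1" and y: "norm y = 1" and s: "norm (x + y) \<le> 2 - d"
    and a: "a \<ge> 0" and b: "b \<ge> 0"
  shows "norm (a *\<^sub>R x + b *\<^sub>R y) \<le> a + b - min a b * d"
proof (cases "a \<le> b")
  case True
  have e: "a *\<^sub>R x + b *\<^sub>R y = a *\<^sub>R (x + y) + (b - a) *\<^sub>R y"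
    by (simp add: scaleR_right_distrib scaleR_left_diff_distrib)
  have "norm (a *\<^sub>R (x + y) + (b - a) *\<^sub>R y) \<le> norm (a *\<^sub>R (x + y)) + norm ((b - a) *\<^sub>R y)"
    by (rule norm_triangle_ineq)
  also have "\<dots> = a * norm (x + y) + (b - a)" using a True y by simp
  also have "\<dots> \<le> a * (2 - d) + (b - a)" using a s by (simp add: mult_left_mono)
  also have "\<dots> = a + b - min a b * d" using True by (simp add: min_def algebra_simps)
  finally show ?thesis unfolding e .
next
  case False
  have e: "a *\<^sub>R x + b *\<^sub>R y = b *\<^sub>R (x + y) + (a - b) *\<^sub>R x"
    by (simp add: scaleR_right_distrib scaleR_left_diff_distrib)
  have "norm (b *\<^sub>R (x + y) + (a - b) *\<^sub>R x) \<le> norm (b *\<^sub>R (x + y)) + norm ((a - b) *\<^sub>R x)"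
    by (rule norm_triangle_ineq)
  also have "\<dots> = b * norm (x + y) + (a - b)" using b False x by simp
  also have "\<dots> \<le> b * (2 - d) + (a - b)" using b s by (simp add: mult_left_mono)
  also have "\<dots> = a + b - min a b * d" using False by (simp add: min_def algebra_simps)
  finally show ?thesis unfolding e .
qed

lemma fin: fixes e d S A :: real
  assumes "0 < e" "e \<le> 1/2" "e \<le> d/40" "d > 0" "S > 0"
  and "(1 - e) * S < (1 + e) * S - (1 - e) * S / 5 * d"
  shows False
proof -
  have "(1 - e) * S / 5 * d = ((1 - e) * d / 5) * S" by simp
  moreover have "(1 - e) * d / 5 \<ge> d / 10" using assms by (simp add: field_simps)
  then have "((1 - e) * d / 5) * S \<ge> (d / 10) * S" using assms(5) by (simp add: mult_right_mono)
  moreover have "(1 + e) * S - (1 - e) * S = (2 * e) * S" by (simp add: algebra_simps)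
  moreover have "(2 * e) * S \<le> (d / 20) * S" using assms by (simp add: mult_right_mono)
  moreover have "(d / 20) * S < (d / 10) * S" using assms by simp
  ultimately show False using assms(6) by linarith
qed

lemma lin_aux: fixes B J N A :: real
  shows "2 * B \<le> J \<Longrightarrow> J + 1 \<le> N \<Longrightarrow> N / 2 < A \<Longrightarrow> A \<le> B \<Longrightarrow> False"
  by linarith

lemma nonzero_part:
  fixes v :: "nat \<Rightarrow> 'a::real_normed_vector"
  assumes sub: "\<And>n m. n \<ge> 1 \<Longrightarrow> m \<ge> 1 \<Longrightarrow> norm (v (n + m)) \<le> norm (v n + v m)"
    and lim: "((\<lambda>n. norm (v n) / real n) \<longlongrightarrow> 1) sequentially"
    and k: "k \<ge> 1" and vk: "v k = 0"
  shows False
proof -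
  have bnd: "norm (v (1 + j * k)) \<le> norm (v 1)" for j
  proof (induction j)
    case 0 then show ?case by simp
  next
    case (Suc j)
    have "norm (v (1 + Suc j * k)) = norm (v ((1 + j * k) + k))" by (simp add: algebra_simps)
    also have "\<dots> \<le> norm (v (1 + j * k) + v k)" using sub[of "1 + j * k" k] k by simp
    also have "\<dots> \<le> norm (v 1)" using vk Suc by simp
    finally show ?case .
  qed
  have sm: "strict_mono (\<lambda>j. 1 + j * k)" using k by (auto simp: strict_mono_def)
  have l1: "((\<lambda>j. norm (v (1 + j * k)) / real (1 + j * k)) \<longlongrightarrow> 1) sequentially"
    using LIMSEQ_subseq_LIMSEQ[OF lim sm] by (simp add: o_def)
  have "eventually (\<lambda>j. norm (v (1 + j * k)) / real (1 + j * k) > 1/2) sequentially"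
    using order_tendstoD(1)[OF l1, of "1/2"] by simp
  then obtain J where J: "\<And>j. j \<ge> J \<Longrightarrow> norm (v (1 + j * k)) / real (1 + j * k) > 1/2"
    by (auto simp: eventually_sequentially)
  define j where "j = max J (nat (ceiling (2 * norm (v 1))))"
  have "real j \<ge> 2 * norm (v 1)" unfolding j_def by linarith
  moreover have "j * 1 \<le> j * k" using k by (rule mult_le_mono2)
  then have "real (1 + j * k) \<ge> real j + 1" by linarith
  moreover have "j \<ge> J" unfolding j_def by simp
  then have h: "norm (v (1 + j * k)) / real (1 + j * k) > 1/2" by (rule J)
  have "norm (v (1 + j * k)) > real (1 + j * k) / 2"
  proof -
    have p: "real (1 + j * k) > 0" by (rule of_nat_0_less_iff[THEN iffD2]) simp
    from h have "1/2 * real (1 + j * k) < norm (v (1 + j * k)) / real (1 + j * k) * real (1 + j * k)"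
      using p by (rule mult_strict_right_mono)
    then show ?thesis using p by simp
  qed
  ultimately show False using bnd[of j] lin_aux by blast
qed

theorem mainTheorem4:
  fixes v :: "nat \<Rightarrow> 'a::banach"
  assumes "uniformly_convex TYPE('a)"
    and "\<And>n m. n \<ge> 1 \<Longrightarrow> m \<ge> 1 \<Longrightarrow> norm (v (n + m)) \<le> norm (v n + v m)"
    and "((\<lambda>n. norm (v n) / real n) \<longlongrightarrow> 1) sequentially"
  shows "(\<forall>n\<ge>1. v n \<noteq> 0) \<and>
    (\<forall>\<epsilon>>0. \<exists>N. \<forall>n m. N \<le> n \<and> n \<le> m \<and> m \<le> 4 * n \<longrightarrow>
        norm (v n /\<^sub>R norm (v n) - v m /\<^sub>R norm (v m)) < \<epsilon>)"
proof
  show nz: "\<forall>n\<ge>1. v n \<noteq> 0" using nonzero_part[OF assms(2,3)] by blast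
  show "\<forall>\<epsilon>>0. \<exists>N. \<forall>n m. N \<le> n \<and> n \<le> m \<and> m \<le> 4 * n \<longrightarrow>
        norm (v n /\<^sub>R norm (v n) - v m /\<^sub>R norm (v m)) < \<epsilon>"
  proof (intro allI impI)
    fix \<epsilon> :: real assume ep: "\<epsilon> > 0"
    have "\<exists>\<delta>>0. \<forall>u w::'a. norm u = 1 \<and> norm w = 1 \<and> norm (u - w) \<ge> \<epsilon>
        \<longrightarrow> norm (u + w) \<le> 2 - \<delta>"
      using spec[OF assms(1)[unfolded uniformly_convex_def], of \<epsilon>] ep by (rule mp)
    then obtain d where d: "d > 0" and dd0: "\<forall>u w::'a. norm u = 1 \<and> norm w = 1 \<and> norm (u - w) \<ge> \<epsilon>
        \<longrightarrow> norm (u + w) \<le> 2 - d" by (elim exE conjE)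
    have dd: "norm (u + w) \<le> 2 - d" if "norm u = 1" "norm w = 1" "norm (u - w) \<ge> \<epsilon>" for u w :: 'a
      using dd0 that by simp
    define \<eta> where "\<eta> = min (1/2) (d/40)"
    have eta: "\<eta> > 0" "\<eta> \<le> 1/2" "\<eta> \<le> d/40" using d by (auto simp: \<eta>_def)
    have "eventually (\<lambda>n. dist (norm (v n) / real n) 1 < \<eta>) sequentially"
      using tendstoD[OF assms(3) eta(1)] .
    then obtain N0 where N0: "\<And>n. n \<ge> N0 \<Longrightarrow> \<bar>norm (v n) / real n - 1\<bar> < \<eta>"
      by (auto simp: eventually_sequentially dist_real_def)
    have bd: "(1 - \<eta>) * n < norm (v n) \<and> norm (v n) < (1 + \<eta>) * n" if "n \<ge> max N0 1" for n
    proof -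
      have np: "real n > 0" using that by simp
      have "\<bar>norm (v n) / real n - 1\<bar> < \<eta>" using N0 that by simp
      then have "(1 - \<eta>) < norm (v n) / real n" "norm (v n) / real n < 1 + \<eta>" by auto
      then show ?thesis using np by (simp add: field_simps)
    qed
    show "\<exists>N. \<forall>n m. N \<le> n \<and> n \<le> m \<and> m \<le> 4 * n \<longrightarrow>
        norm (v n /\<^sub>R norm (v n) - v m /\<^sub>R norm (v m)) < \<epsilon>"
    proof (intro exI allI impI)
      fix n m assume nm: "max N0 1 \<le> n \<and> n \<le> m \<and> m \<le> 4 * n"
      have bn: "(1 - \<eta>) * n < norm (v n)" "norm (v n) < (1 + \<eta>) * n" using bd nm by auto
      have bm: "(1 - \<eta>) * m < norm (v m)" "norm (v m) < (1 + \<eta>) * m" using bd[of m] nm by auto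
      have bnm: "(1 - \<eta>) * (n + m) < norm (v (n + m))" using bd[of "n+m"] nm by auto
      have n1: "n \<ge> 1" "m \<ge> 1" using nm by auto
      have sub: "norm (v (n + m)) \<le> norm (v n + v m)" using assms(2) n1 by simp
      define a where "a = norm (v n)"
      define b where "b = norm (v m)"
      define x where "x = v n /\<^sub>R a"
      define y where "y = v m /\<^sub>R b"
      have a0: "a > 0" "b > 0" using nz n1 by (auto simp: a_def b_def)
      have xn: "norm x = 1" "norm y = 1" using a0 by (auto simp: x_def y_def a_def b_def)
      have vx: "v n = a *\<^sub>R x" "v m = b *\<^sub>R y" using a0 by (auto simp: x_def y_def)
      show "norm (v n /\<^sub>R norm (v n) - v m /\<^sub>R norm (v m)) < \<epsilon>"
      proof (rule ccontr)
        assume "\<not> ?thesis"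
        then have "norm (x - y) \<ge> \<epsilon>" by (simp add: x_def y_def a_def b_def)
        then have s: "norm (x + y) \<le> 2 - d" using dd xn by blast
        have key: "norm (v n + v m) \<le> a + b - min a b * d"
          using uc_ineq[OF xn s, of a b] a0 vx by simp
        have mn: "min a b \<ge> (1 - \<eta>) * (real n + real m) / 5"
        proof -
          have "real m \<le> 4 * real n" using nm by linarith
          have "real n \<le> real m" using nm by simp
          have h: "0 \<le> (1 - \<eta>) * (4 * real n - real m)"
            using \<open>real m \<le> 4 * real n\<close> eta by simp
          have "(1 - \<eta>) * real n - (1 - \<eta>) * (real n + real m) / 5 = (1 - \<eta>) * (4 * real n - real m) / 5"
            by (simp add: divide_simps) (simp add: algebra_simps)
          then have "(1 - \<eta>) * real n \<ge> (1 - \<eta>) * (real n + real m) / 5"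
            using h by linarith
          moreover have "(1 - \<eta>) * real n \<le> (1 - \<eta>) * real m"
            using \<open>real n \<le> real m\<close> eta by (simp add: mult_left_mono)
          ultimately show ?thesis using bn bm unfolding a_def b_def by linarith
        qed
        have P: "real n + real m > 0" using n1 by simp
        define S where "S = real n + real m"
        have bnm': "(1 - \<eta>) * S < norm (v (n + m))" using bnm unfolding S_def by simp
        have ab: "a + b < (1 + \<eta>) * S"
          using bn bm unfolding S_def a_def b_def by (simp add: distrib_left)
        have md: "min a b * d \<ge> (1 - \<eta>) * S / 5 * d"
          using mult_right_mono[OF mn, of d] d unfolding S_def by simp
        have "(1 - \<eta>) * S < (1 + \<eta>) * S - (1 - \<eta>) * S / 5 * d"
          using bnm' sub key ab md by linarith
        then show False using fin[OF eta d, of S] P unfolding S_def by blast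
      qed
    qed
  qed
qed

end
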